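(* Let $p\ge 2$ and $q$ be coprime integers, $I_1,I_3>0$, $\eta=I_1/I_3-1$. For every $h\in C$ define $$t_{\max}(h)=\frac{2I_1\,\min\big(\pi,\tau_\ell(\bar h_3)\big)}{|h|}.$$ Then $t_{\max}(h)\le t_{\mathrm{conj}}(h)$ for every $h\in C$, where $t_{\mathrm{conj}}(h)$ is the first conjugate time along the unit-speed geodesic $\gamma_h$ (i.e., the smallest $t>0$ such that $\gamma_h(t)$ is conjugate to $\gamma_h(0)$ along $\gamma_h$, or $+\infty$ if none).
   Context: Identify $S^3=\{(z,w)\in\mathbb{C}^2:|z|^2+|w|^2=1\}$ with $\mathrm{SU}_2$ via $(z,w)\mapsto\begin{pmatrix} z& w\\ -\bar w&\bar z\end{pmatrix}$, write $z=q_0+iq_3$, $w=q_1+iq_2$. The basis of $\mathfrak{su}_2$ is $e_1=\frac12\begin{pmatrix}0&1\\-1&0\end{pmatrix}$, $e_2=\frac12\begin{pmatrix}0&i\\ i&0\end{pmatrix}$, $e_3=\frac12\begin{pmatrix}i&0\\0&-i\end{pmatrix}$. The metric $g$ is the left-invariant metric on $\mathrm{SU}_2$ equal to $I_1u_1^2+I_1u_2^2+I_3u_3^2$ at the identity on $u_1e_1+u_2e_2+u_3e_3$; it is invariant under the $\mathbb{Z}_p$-action $[k]\cdot(z,w)=(e^{2\pi ik/p}z,e^{2\pi ikq/p}w)$, so it descends to $L(p;q)=S^3/\mathbb{Z}_p$ (projection $\Pi$); conjugate points along a geodesic are the same upstairs and downstairs. Let $C=\{h=(h_1,h_2,h_3)\in\mathfrak{su}_2^*: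 \frac{h_1^2+h_2^2}{I_1}+\frac{h_3^2}{I_3}=1\}$ (coordinates in the dual basis); each $h\in C$ determines the arclength-parametrized geodesic $\gamma_h$ of $(\mathrm{SU}_2,g)$ from the identity (the projection of the Hamiltonian flow of $H=\frac12(\frac{h_1^2+h_2^2}{I_1}+\frac{h_3^2}{I_3})$ starting at $h$). Put $|h|=\sqrt{h_1^2+h_2^2+h_3^2}$, $\bar h_i=h_i/|h|$, $\tau=2I_1t/|h|$; note $|h|=\sqrt{I_1}/\sqrt{1+\eta\bar h_3^2}$. Along $\gamma_h$: $q_0=\cos\tau\cos(\tau\eta\bar h_3)-\bar h_3\sin\tau\sin(\tau\eta\bar h_3)$, $q_3=\cos\tau\sin(\tau\eta\bar h_3)+\bar h_3\sin\tau\cos(\tau\eta\bar h_3)$. Define $\ell_\mp(\tau,s)=\cos\tau\sin(\tau\eta s\mp\frac{\pi}{p})+s\sin\tau\cos(\tau\eta s\mp\frac{\pi}{p})$ (these equal $q_3\cos\frac\pi p\mp q_0\sin\frac\pi p$ along $\gamma_h$ with $s=\bar h_3$), let $\tau_\ell^\mp(s)$ be the smallest positive root in $\tau$ of $\ell_\mp(\tau,s)=0$ and $\tau_\ell(s)=\min(\tau_\ell^-(s),\tau_\ell^+(s))$. *)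

theory Defs
  imports "HOL-Analysis.Analysis"
begin

text \<open>2x2 complex matrices; SU(2) is represented inside complex^2^2.\<close>

definition mat2 :: "complex \<Rightarrow> complex \<Rightarrow> complex \<Rightarrow> complex \<Rightarrow> complex^2^2" where
  "mat2 a b c d = (\<chi> i j. if i = 1 then (if j = 1 then a else b) else (if j = 1 then c else d))"

definition su2_e1 :: "complex^2^2" where "su2_e1 = mat2 0 (1/2) (-1/2) 0"
definition su2_e2 :: "complex^2^2" where "su2_e2 = mat2 0 (\<i>/2) (\<i>/2) 0"
definition su2_e3 :: "complex^2^2" where "su2_e3 = mat2 (\<i>/2) 0 0 (-\<i>/2)"

text \<open>Velocity u = dH(h) in su(2) for the Hamiltonian
  H = 1/2 ((h1^2+h2^2)/I1 + h3^2/I3); coordinates h$1,h$2,h$3 w.r.t. the dual basis.\<close>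
definition vel :: "real \<Rightarrow> real \<Rightarrow> real^3 \<Rightarrow> real^3" where
  "vel I1 I3 h = vector [h$1 / I1, h$2 / I1, h$3 / I3]"

definition vel_mat :: "real \<Rightarrow> real \<Rightarrow> real^3 \<Rightarrow> complex^2^2" where
  "vel_mat I1 I3 h = (let u = vel I1 I3 h in
     (u$1) *\<^sub>R su2_e1 + (u$2) *\<^sub>R su2_e2
     + (u$3) *\<^sub>R su2_e3)"

text \<open>Coadjoint term ad*_u h, <ad*_u h, X> = <h,[u,X]>, with [e1,e2]=e3 etc.\<close>
definition coad :: "real^3 \<Rightarrow> real^3 \<Rightarrow> real^3" where
  "coad u h = vector [h$2 * u$3 - h$3 * u$2, h$3 * u$1 - h$1 * u$3, h$1 * u$2 - h$2 * u$1]"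

text \<open>Hamiltonian flow of H on T*SU2 = SU2 x su2*, left trivialization, starting at (Id, lam):
  g' = g u, h' = ad*_u h, u = dH(h).\<close>
definition ham_traj :: "real \<Rightarrow> real \<Rightarrow> real^3 \<Rightarrow> (real \<Rightarrow> (complex^2^2) \<times> (real^3)) \<Rightarrow> bool" where
  "ham_traj I1 I3 lam \<gamma> \<longleftrightarrow> \<gamma> 0 = (mat 1, lam) \<and>
     (\<forall>s. (\<gamma> has_vector_derivative
            (fst (\<gamma> s) ** vel_mat I1 I3 (snd (\<gamma> s)), coad (vel I1 I3 (snd (\<gamma> s))) (snd (\<gamma> s)))) (at s))"

definition Exp_map :: "real \<Rightarrow> real \<Rightarrow> real \<Rightarrow> real^3 \<Rightarrow> complex^2^2" where
  "Exp_map I1 I3 t lam = fst ((THE \<gamma>. ham_traj I1 I3 lam \<gamma>) t)"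

text \<open>t > 0 is a conjugate time along gamma_h iff h is a critical point of Exp_t.\<close>
definition conjugate_time :: "real \<Rightarrow> real \<Rightarrow> real^3 \<Rightarrow> real \<Rightarrow> bool" where
  "conjugate_time I1 I3 h t \<longleftrightarrow> t > 0 \<and>
     \<not> (\<exists>D. (Exp_map I1 I3 t has_derivative D) (at h) \<and> inj D)"

definition C_set :: "real \<Rightarrow> real \<Rightarrow> (real^3) set" where
  "C_set I1 I3 = {h. ((h$1)^2 + (h$2)^2) / I1 + (h$3)^2 / I3 = 1}"

definition ell_minus :: "real \<Rightarrow> int \<Rightarrow> real \<Rightarrow> real \<Rightarrow> real" where
  "ell_minus \<eta> p \<tau> s = cos \<tau> * sin (\<tau> * \<eta> * s - pi / p) + s * sin \<tau> * cos (\<tau> * \<eta> * s - pi / p)"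

definition ell_plus :: "real \<Rightarrow> int \<Rightarrow> real \<Rightarrow> real \<Rightarrow> real" where
  "ell_plus \<eta> p \<tau> s = cos \<tau> * sin (\<tau> * \<eta> * s + pi / p) + s * sin \<tau> * cos (\<tau> * \<eta> * s + pi / p)"

definition first_pos_root :: "(real \<Rightarrow> real) \<Rightarrow> ereal" where
  "first_pos_root f = Inf (ereal ` {\<tau>. \<tau> > 0 \<and> f \<tau> = 0})"

definition tau_ell :: "real \<Rightarrow> int \<Rightarrow> real \<Rightarrow> ereal" where
  "tau_ell \<eta> p s = min (first_pos_root (\<lambda>\<tau>. ell_minus \<eta> p \<tau> s))
                        (first_pos_root (\<lambda>\<tau>. ell_plus \<eta> p \<tau> s))"

definition t_max :: "real \<Rightarrow> real \<Rightarrow> int \<Rightarrow> real^3 \<Rightarrow> ereal" where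
  "t_max I1 I3 p h = (let \<eta> = I1 / I3 - 1; hb3 = h$3 / norm h in
     ereal (2 * I1 / norm h) * min (ereal pi) (tau_ell \<eta> p hb3))"

end

theory Submission
  imports Defs
begin

lemma mat2_nth: "(mat2 a b c d)$1$1 = a" "(mat2 a b c d)$1$2 = b" "(mat2 a b c d)$2$1 = c" "(mat2 a b c d)$2$2 = d"
  by (simp_all add: mat2_def)

lemma mat2_eq_iff: "mat2 a b c d = mat2 a' b' c' d' \<longleftrightarrow> a = a' \<and> b = b' \<and> c = c' \<and> d = d'"
  by (auto simp: mat2_def vec_eq_iff forall_2)

lemma mat2_mult: "mat2 a b c d ** mat2 a' b' c' d' = mat2 (a*a'+b*c') (a*b'+b*d') (c*a'+d*c') (c*b'+d*d')"
  by (simp add: mat2_def matrix_matrix_mult_def vec_eq_iff forall_2 sum_2)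

lemma mat2_one: "mat 1 = mat2 1 0 0 1"
  by (simp add: mat2_def mat_def vec_eq_iff forall_2)

lemma mat2_add: "mat2 a b c d + mat2 a' b' c' d' = mat2 (a+a') (b+b') (c+c') (d+d')"
  by (simp add: mat2_def vec_eq_iff forall_2)

lemma mat2_scaleR: "r *\<^sub>R mat2 a b c d = mat2 (r*\<^sub>Ra) (r*\<^sub>Rb) (r*\<^sub>Rc) (r*\<^sub>Rd)"
  by (simp add: mat2_def vec_eq_iff forall_2)

lemma vel_mat_eq: "vel_mat I1 I3 h = mat2 (\<i> * of_real (h$3/I3) / 2) ((of_real (h$1/I1) + \<i> * of_real (h$2/I1))/2)
   ((- of_real (h$1/I1) + \<i> * of_real (h$2/I1))/2) (- \<i> * of_real (h$3/I3) / 2)"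
  unfolding vel_mat_def vel_def Let_def su2_e1_def su2_e2_def su2_e3_def
  apply (simp only: mat2_add mat2_scaleR mat2_eq_iff)
  by (simp add: scaleR_conv_of_real field_simps)

lemma comp_derivs:
  fixes \<gamma> :: "real \<Rightarrow> (complex^2^2) \<times> (real^3)"
  assumes "(\<gamma> has_vector_derivative (G', H')) (at s)"
  shows "((\<lambda>s. fst (\<gamma> s) $ i $ j) has_vector_derivative G' $ i $ j) (at s)"
    and "((\<lambda>s. snd (\<gamma> s) $ k) has_real_derivative H' $ k) (at s)"
proof -
  have "((\<lambda>s. fst (\<gamma> s)) has_vector_derivative G') (at s)"
    using bounded_linear.has_vector_derivative[OF bounded_linear_fst assms] by simp
  then have "((\<lambda>s. fst (\<gamma> s) $ i) has_vector_derivative G' $ i) (at s)"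
    using bounded_linear.has_vector_derivative[OF bounded_linear_vec_nth] by blast
  then show "((\<lambda>s. fst (\<gamma> s) $ i $ j) has_vector_derivative G' $ i $ j) (at s)"
    using bounded_linear.has_vector_derivative[OF bounded_linear_vec_nth] by blast
  have "((\<lambda>s. snd (\<gamma> s)) has_vector_derivative H') (at s)"
    using bounded_linear.has_vector_derivative[OF bounded_linear_snd assms] by simp
  then have "((\<lambda>s. snd (\<gamma> s) $ k) has_vector_derivative H' $ k) (at s)"
    using bounded_linear.has_vector_derivative[OF bounded_linear_vec_nth] by blast
  then show "((\<lambda>s. snd (\<gamma> s) $ k) has_real_derivative H' $ k) (at s)"
    by (simp add: has_real_derivative_iff_has_vector_derivative)
qed

definition cc :: "real \<Rightarrow> real \<Rightarrow> real^3 \<Rightarrow> real" where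
  "cc I1 I3 l = l$3 * (1/I3 - 1/I1)"

definition hsol :: "real \<Rightarrow> real \<Rightarrow> real^3 \<Rightarrow> real \<Rightarrow> real^3" where
  "hsol I1 I3 l s = vector [l$1 * cos (cc I1 I3 l * s) + l$2 * sin (cc I1 I3 l * s),
      - l$1 * sin (cc I1 I3 l * s) + l$2 * cos (cc I1 I3 l * s), l$3]"

lemma coad_vel:
  "coad (vel I1 I3 h) h $ 1 = h$2 * h$3 * (1/I3 - 1/I1)"
  "coad (vel I1 I3 h) h $ 2 = - h$1 * h$3 * (1/I3 - 1/I1)"
  "coad (vel I1 I3 h) h $ 3 = 0"
  by (simp_all add: coad_def vel_def vector_3 algebra_simps)

lemma h_unique:
  assumes "ham_traj I1 I3 l \<gamma>"
  shows "snd (\<gamma> s) = hsol I1 I3 l s"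
proof -
  define H where "H = (\<lambda>s. snd (\<gamma> s))"
  have H0: "H 0 = l" using assms by (simp add: ham_traj_def H_def)
  have dH: "\<And>s k. ((\<lambda>s. H s $ k) has_real_derivative coad (vel I1 I3 (H s)) (H s) $ k) (at s)"
    unfolding H_def by (rule comp_derivs(2)) (use assms in \<open>auto simp: ham_traj_def\<close>)
  have H3: "H s $ 3 = l $ 3" for s
  proof -
    have "H s $ 3 = H 0 $ 3"
      by (rule DERIV_isconst_all[of "\<lambda>s. H s $ 3"]) (use dH[where k=3] in \<open>auto simp: coad_vel\<close>)
    then show ?thesis using H0 by simp
  qed
  define c where "c = cc I1 I3 l"
  define E where "E = (\<lambda>s. (H s $ 1 - hsol I1 I3 l s $ 1)^2 + (H s $ 2 - hsol I1 I3 l s $ 2)^2)"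
  have hs1: "hsol I1 I3 l s $ 1 = l$1 * cos (c * s) + l$2 * sin (c * s)" for s
    by (simp add: hsol_def c_def vector_3)
  have hs2: "hsol I1 I3 l s $ 2 = - l$1 * sin (c * s) + l$2 * cos (c * s)" for s
    by (simp add: hsol_def c_def vector_3)
  have hs3: "hsol I1 I3 l s $ 3 = l$3" for s
    by (simp add: hsol_def vector_3)
  have dE: "(E has_real_derivative 0) (at s)" for s
  proof -
    have d1: "((\<lambda>s. H s $ 1) has_real_derivative c * H s $ 2) (at s)"
      using dH[where s=s and k=1] by (simp add: coad_vel H3 c_def cc_def algebra_simps)
    have d2: "((\<lambda>s. H s $ 2) has_real_derivative - c * H s $ 1) (at s)"
      using dH[where s=s and k=2] by (simp add: coad_vel H3 c_def cc_def algebra_simps)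
    show ?thesis
      unfolding E_def hs1 hs2
      by (rule derivative_eq_intros d1 d2 refl | simp)+ (simp add: algebra_simps)
  qed
  have "E s = E 0" by (rule DERIV_isconst_all) (use dE in blast)
  also have "E 0 = 0" using H0 by (simp add: E_def hs1 hs2)
  finally have "E s = 0" .
  then have "H s $ 1 = hsol I1 I3 l s $ 1" "H s $ 2 = hsol I1 I3 l s $ 2"
    unfolding E_def by (simp_all add: sum_power2_eq_zero_iff)
  then show ?thesis using H3 hs3 unfolding H_def
    by (simp add: vec_eq_iff forall_3)
qed

lemma row_unique:
  fixes x y x0 y0 :: "real \<Rightarrow> complex" and ua ub uc :: "real \<Rightarrow> real"
  assumes dx: "\<And>s. (x has_vector_derivative (x s * (\<i> * of_real (uc s) / 2) + y s * ((- of_real (ua s) + \<i> * of_real (ub s))/2))) (at s)"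
    and dy: "\<And>s. (y has_vector_derivative (x s * ((of_real (ua s) + \<i> * of_real (ub s))/2) + y s * (- \<i> * of_real (uc s) / 2))) (at s)"
    and dx0: "\<And>s. (x0 has_vector_derivative (x0 s * (\<i> * of_real (uc s) / 2) + y0 s * ((- of_real (ua s) + \<i> * of_real (ub s))/2))) (at s)"
    and dy0: "\<And>s. (y0 has_vector_derivative (x0 s * ((of_real (ua s) + \<i> * of_real (ub s))/2) + y0 s * (- \<i> * of_real (uc s) / 2))) (at s)"
    and i0: "x 0 = x0 0" "y 0 = y0 0"
  shows "x s = x0 s \<and> y s = y0 s"
proof -
  define p where "p = (\<lambda>s. x s - x0 s)"
  define q where "q = (\<lambda>s. y s - y0 s)"
  have dp: "(p has_vector_derivative (p s * (\<i> * of_real (uc s) / 2) + q s * ((- of_real (ua s) + \<i> * of_real (ub s))/2))) (at s)" for s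
    unfolding p_def q_def by (rule has_vector_derivative_diff[OF dx dx0, THEN has_vector_derivative_eq_rhs]) (simp add: field_simps)
  have dq: "(q has_vector_derivative (p s * ((of_real (ua s) + \<i> * of_real (ub s))/2) + q s * (- \<i> * of_real (uc s) / 2))) (at s)" for s
    unfolding p_def q_def by (rule has_vector_derivative_diff[OF dy dy0, THEN has_vector_derivative_eq_rhs]) (simp add: field_simps)
  define E where "E = (\<lambda>s. (Re (p s))^2 + (Im (p s))^2 + (Re (q s))^2 + (Im (q s))^2)"
  have dE: "(E has_real_derivative 0) (at s)" for s
  proof -
    have "(E has_real_derivative
      2 * Re (p s) * Re (p s * (\<i> * of_real (uc s) / 2) + q s * ((- of_real (ua s) + \<i> * of_real (ub s))/2))
      + 2 * Im (p s) * Im (p s * (\<i> * of_real (uc s) / 2) + q s * ((- of_real (ua s) + \<i> * of_real (ub s))/2))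
      + 2 * Re (q s) * Re (p s * ((of_real (ua s) + \<i> * of_real (ub s))/2) + q s * (- \<i> * of_real (uc s) / 2))
      + 2 * Im (q s) * Im (p s * ((of_real (ua s) + \<i> * of_real (ub s))/2) + q s * (- \<i> * of_real (uc s) / 2))) (at s)"
      unfolding E_def
      by (rule derivative_eq_intros has_field_derivative_Re[OF dp] has_field_derivative_Im[OF dp]
            has_field_derivative_Re[OF dq] has_field_derivative_Im[OF dq] refl | simp)+
    moreover have "2 * Re (p s) * Re (p s * (\<i> * of_real (uc s) / 2) + q s * ((- of_real (ua s) + \<i> * of_real (ub s))/2))
      + 2 * Im (p s) * Im (p s * (\<i> * of_real (uc s) / 2) + q s * ((- of_real (ua s) + \<i> * of_real (ub s))/2))
      + 2 * Re (q s) * Re (p s * ((of_real (ua s) + \<i> * of_real (ub s))/2) + q s * (- \<i> * of_real (uc s) / 2))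
      + 2 * Im (q s) * Im (p s * ((of_real (ua s) + \<i> * of_real (ub s))/2) + q s * (- \<i> * of_real (uc s) / 2)) = 0"
      by (simp add: field_simps)
    ultimately show ?thesis by simp
  qed
  have "E s = E 0" by (rule DERIV_isconst_all) (use dE in blast)
  also have "E 0 = 0" using i0 by (simp add: E_def p_def q_def)
  finally have "E s = 0" .
  then have "Re (p s) = 0 \<and> Im (p s) = 0 \<and> Re (q s) = 0 \<and> Im (q s) = 0"
    unfolding E_def by (smt (verit) zero_le_power2 zero_eq_power2)
  then show ?thesis by (simp add: p_def q_def complex_eq_iff)
qed

lemma hvd_cis[derivative_intros]:
  assumes "(f has_real_derivative f') (at x)"
  shows "((\<lambda>x. cis (f x)) has_vector_derivative (\<i> * of_real f' * cis (f x))) (at x)"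
proof -
  have "((\<lambda>x. cis (f x)) has_derivative (\<lambda>t. (f' * t) *\<^sub>R (\<i> * cis (f x)))) (at x)"
    using has_derivative_cis[of f "(*) f'" x UNIV] assms
    by (simp add: has_field_derivative_def)
  then show ?thesis
    unfolding has_vector_derivative_def
    by (simp add: scaleR_conv_of_real algebra_simps)
qed

definition asol :: "real \<Rightarrow> real \<Rightarrow> real^3 \<Rightarrow> real \<Rightarrow> complex" where
  "asol I1 I3 l s = (of_real (cos (s * norm l / (2*I1))) + \<i> * of_real (l$3 / norm l * sin (s * norm l / (2*I1))))
      * cis (s * cc I1 I3 l / 2)"

definition bsol :: "real \<Rightarrow> real \<Rightarrow> real^3 \<Rightarrow> real \<Rightarrow> complex" where
  "bsol I1 I3 l s = of_real (sin (s * norm l / (2*I1)) / norm l) * (of_real (l$1) + \<i> * of_real (l$2))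
      * cis (- (s * cc I1 I3 l / 2))"

lemma dA_raw: assumes "I1 \<noteq> 0" shows "(asol I1 I3 l has_vector_derivative
   ((of_real (- sin (s * norm l / (2*I1)) * (norm l / (2*I1))) + \<i> * of_real (l$3 / norm l * (cos (s * norm l / (2*I1)) * (norm l / (2*I1)))))
      * cis (s * cc I1 I3 l / 2) +
    (of_real (cos (s * norm l / (2*I1))) + \<i> * of_real (l$3 / norm l * sin (s * norm l / (2*I1))))
      * (\<i> * of_real (cc I1 I3 l / 2) * cis (s * cc I1 I3 l / 2)))) (at s)"
  unfolding asol_def
  apply (rule derivative_eq_intros refl | simp add: assms)+
  done


lemma cisid: "cis (- x) * cis x = 1" "cis (x/2) * cis (x/2) = cis x" "cis (-(x/2)) * cis (-(x/2)) = cis (-x)"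
  by (simp_all add: cis_mult)

lemma hsol_c: "of_real (hsol I1 I3 l s $ 1) + \<i> * of_real (hsol I1 I3 l s $ 2)
   = (of_real (l$1) + \<i> * of_real (l$2)) * cis (- (cc I1 I3 l * s))"
  by (simp add: hsol_def complex_eq_iff)
lemma hsol_c': "- of_real (hsol I1 I3 l s $ 1) + \<i> * of_real (hsol I1 I3 l s $ 2)
   = - (of_real (l$1) - \<i> * of_real (l$2)) * cis (cc I1 I3 l * s)"
  by (simp add: hsol_def complex_eq_iff)
lemma w2: "cis (c * s) = cis (s * c / 2) * cis (s * c / 2)"
  by (simp add: cis_mult)

lemma norm3: "norm (l::real^3) ^ 2 = l$1^2 + l$2^2 + l$3^2"
  by (simp add: norm_vec_def L2_set_def sum_3)

lemma ring6: fixes a X Y w iw q :: "'a::comm_ring_1"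
  shows "a * X * iw * ((- Y * (w * w)) * q) = - (a * (X * Y) * (iw * w) * w * q)"
  by (simp add: algebra_simps)

lemma ringL: fixes a b c w :: "'a::comm_ring_1"
  shows "a * w + b * (c * w) = w * (a + b * c)"
  by (simp add: algebra_simps)

lemma ringF: fixes P Q Rr w :: "'a::comm_ring_1"
  shows "w * (P * Q - Rr) = P * w * Q + - (Rr * w)"
  by (simp add: algebra_simps)

lemma zz: "(of_real a + \<i> * of_real b) * (of_real a - \<i> * of_real b) = (of_real (a^2 + b^2) :: complex)"
  by (simp add: complex_eq_iff power2_eq_square)

lemma dA:
  assumes I: "I1 > 0" "I3 > 0" and r: "norm l \<noteq> 0"
  shows "(asol I1 I3 l has_vector_derivative
     (asol I1 I3 l s * (\<i> * of_real (hsol I1 I3 l s $ 3 / I3) / 2)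
     + bsol I1 I3 l s * ((- of_real (hsol I1 I3 l s $ 1 / I1) + \<i> * of_real (hsol I1 I3 l s $ 2 / I1)) / 2))) (at s)"
proof (rule has_vector_derivative_eq_rhs[OF dA_raw])
  show "I1 \<noteq> 0" using I by simp
  define w where "w = cis (s * cc I1 I3 l / 2)"
  define iw where "iw = cis (- (s * cc I1 I3 l / 2))"
  define th where "th = s * norm l / (2*I1)"
  have wiw: "iw * w = 1" unfolding w_def iw_def by (rule cisid)
  have w2: "cis (cc I1 I3 l * s) = w * w" unfolding w_def by (rule w2)
  have h3: "hsol I1 I3 l s $ 3 = l$3" by (simp add: hsol_def)
  have hc: "- of_real (hsol I1 I3 l s $ 1 / I1) + \<i> * of_real (hsol I1 I3 l s $ 2 / I1) =
     (- of_real (hsol I1 I3 l s $ 1) + \<i> * of_real (hsol I1 I3 l s $ 2)) / of_real I1"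
    by (simp add: add_divide_distrib diff_divide_distrib)
  have nn: "l$1^2 + l$2^2 = norm l ^ 2 - l$3^2" using norm3[of l] by simp
  define X where "X = of_real (-sin th * (norm l/(2*I1))) + \<i> * of_real (l$3/norm l * (cos th * (norm l/(2*I1))))
     + (of_real (cos th) + \<i> * of_real (l$3/norm l * sin th)) * (\<i> * of_real (cc I1 I3 l / 2))"
  define Y where "Y = (of_real (cos th) + \<i> * of_real (l$3/norm l * sin th)) * (\<i> * of_real (l$3/I3) / 2)
     - of_real (sin th / norm l * (norm l ^ 2 - l$3^2) / I1 / 2)"
  have XY: "X = Y"
    unfolding X_def Y_def using I r
    apply (simp add: complex_eq_iff)
    using r I apply (simp add: cc_def field_simps power2_eq_square)
    done
  have L: "((of_real (- sin th * (norm l / (2*I1))) + \<i> * of_real (l$3 / norm l * (cos th * (norm l / (2*I1)))))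
      * w + (of_real (cos th) + \<i> * of_real (l$3 / norm l * sin th)) * (\<i> * of_real (cc I1 I3 l / 2) * w)) = w * X"
    unfolding X_def by (simp only: ringL)
  have R1: "of_real (sin th / norm l) * (of_real (l$1) + \<i> * of_real (l$2)) * iw
      * ((- (of_real (l$1) - \<i> * of_real (l$2)) * (w * w)) / of_real I1 / 2)
     = - (of_real (sin th / norm l) * ((of_real (l$1) + \<i> * of_real (l$2)) * (of_real (l$1) - \<i> * of_real (l$2)))
        * (iw * w) * w / of_real I1 / 2)"
    using ring6[of "of_real (sin th / norm l)" "(of_real (l$1) + \<i> * of_real (l$2))" iw
       "(of_real (l$1) - \<i> * of_real (l$2))" w "inverse (of_real I1) / 2"]
    by (simp only: divide_inverse mult.assoc)
  also have "\<dots> = - (of_real (sin th / norm l * (norm l ^ 2 - l$3^2) / I1 / 2) * w)"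
    unfolding zz wiw nn by simp
  finally have R1': "of_real (sin th / norm l) * (of_real (l$1) + \<i> * of_real (l$2)) * iw
      * ((- (of_real (l$1) - \<i> * of_real (l$2)) * (w * w)) / of_real I1 / 2)
      = - (of_real (sin th / norm l * (norm l ^ 2 - l$3^2) / I1 / 2) * w)" .
  show "((of_real (- sin (s * norm l / (2*I1)) * (norm l / (2*I1))) + \<i> * of_real (l$3 / norm l * (cos (s * norm l / (2*I1)) * (norm l / (2*I1)))))
      * cis (s * cc I1 I3 l / 2) +
    (of_real (cos (s * norm l / (2*I1))) + \<i> * of_real (l$3 / norm l * sin (s * norm l / (2*I1))))
      * (\<i> * of_real (cc I1 I3 l / 2) * cis (s * cc I1 I3 l / 2))) =
     (asol I1 I3 l s * (\<i> * of_real (hsol I1 I3 l s $ 3 / I3) / 2)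
     + bsol I1 I3 l s * ((- of_real (hsol I1 I3 l s $ 1 / I1) + \<i> * of_real (hsol I1 I3 l s $ 2 / I1)) / 2))"
    unfolding hc hsol_c' asol_def bsol_def w2 h3 w_def[symmetric] iw_def[symmetric] th_def[symmetric] L R1'
    unfolding XY Y_def by (rule ringF)
qed

lemma dB_raw: assumes "I1 \<noteq> 0" "l \<noteq> 0" shows "(bsol I1 I3 l has_vector_derivative
   (of_real (cos (s * norm l / (2*I1)) * (norm l / (2*I1)) / norm l) * (of_real (l$1) + \<i> * of_real (l$2))
      * cis (- (s * cc I1 I3 l / 2)) +
    of_real (sin (s * norm l / (2*I1)) / norm l) * (of_real (l$1) + \<i> * of_real (l$2))
      * (\<i> * of_real (- (cc I1 I3 l / 2)) * cis (- (s * cc I1 I3 l / 2))))) (at s)"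
  unfolding bsol_def
  apply (rule derivative_eq_intros has_vector_derivative_const refl | simp add: assms)+
  done

lemma dB:
  assumes I: "I1 > 0" "I3 > 0" and r: "norm l \<noteq> 0"
  shows "(bsol I1 I3 l has_vector_derivative
     (asol I1 I3 l s * ((of_real (hsol I1 I3 l s $ 1 / I1) + \<i> * of_real (hsol I1 I3 l s $ 2 / I1)) / 2)
     + bsol I1 I3 l s * (- \<i> * of_real (hsol I1 I3 l s $ 3 / I3) / 2))) (at s)"
proof (rule has_vector_derivative_eq_rhs[OF dB_raw])
  show "I1 \<noteq> 0" using I by simp
  show "l \<noteq> 0" using r by simp
  define w where "w = cis (s * cc I1 I3 l / 2)"
  define iw where "iw = cis (- (s * cc I1 I3 l / 2))"
  define th where "th = s * norm l / (2*I1)"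
  define zl where "zl = of_real (l$1) + \<i> * of_real (l$2)"
  have wiw: "iw * w = 1" unfolding w_def iw_def by (rule cisid)
  have w2: "cis (- (cc I1 I3 l * s)) = iw * iw" unfolding iw_def cis_mult
    by (rule arg_cong[where f=cis]) (simp add: algebra_simps)
  have h3: "hsol I1 I3 l s $ 3 = l$3" by (simp add: hsol_def)
  have hc: "of_real (hsol I1 I3 l s $ 1 / I1) + \<i> * of_real (hsol I1 I3 l s $ 2 / I1) =
     (of_real (hsol I1 I3 l s $ 1) + \<i> * of_real (hsol I1 I3 l s $ 2)) * inverse (of_real I1)"
    by (simp add: divide_inverse algebra_simps)
  define X where "X = of_real (cos th * (norm l/(2*I1)) / norm l) * zl + of_real (sin th / norm l) * zl * (\<i> * of_real (- (cc I1 I3 l / 2)))"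
  define Y where "Y = (of_real (cos th) + \<i> * of_real (l$3/norm l * sin th)) * zl * inverse (of_real I1) / 2
     - of_real (sin th / norm l) * zl * (\<i> * of_real (l$3/I3) / 2)"
  have XY: "X = Y"
    unfolding X_def Y_def zl_def
    apply (simp add: complex_eq_iff)
    using r I apply (simp add: cc_def field_simps power2_eq_square)
    done
  have L: "of_real (cos th * (norm l / (2*I1)) / norm l) * zl * iw +
    of_real (sin th / norm l) * zl * (\<i> * of_real (- (cc I1 I3 l / 2)) * iw) = iw * X"
    unfolding X_def by (simp add: algebra_simps)
  have R: "(of_real (cos th) + \<i> * of_real (l$3/norm l * sin th)) * w * (zl * (iw * iw) * inverse (of_real I1) / 2)
     + of_real (sin th / norm l) * zl * iw * (- \<i> * of_real (l$3/I3) / 2) = iw * Y"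
  proof -
    have "(of_real (cos th) + \<i> * of_real (l$3/norm l * sin th)) * w * (zl * (iw * iw) * inverse (of_real I1) / 2)
       = iw * ((of_real (cos th) + \<i> * of_real (l$3/norm l * sin th)) * zl * inverse (of_real I1) / 2) * (iw * w)"
      by (simp add: algebra_simps)
    then show ?thesis unfolding wiw Y_def by (simp add: algebra_simps)
  qed
  show "of_real (cos (s * norm l / (2*I1)) * (norm l / (2*I1)) / norm l) * (of_real (l$1) + \<i> * of_real (l$2))
      * cis (- (s * cc I1 I3 l / 2)) +
    of_real (sin (s * norm l / (2*I1)) / norm l) * (of_real (l$1) + \<i> * of_real (l$2))
      * (\<i> * of_real (- (cc I1 I3 l / 2)) * cis (- (s * cc I1 I3 l / 2))) =
     asol I1 I3 l s * ((of_real (hsol I1 I3 l s $ 1 / I1) + \<i> * of_real (hsol I1 I3 l s $ 2 / I1)) / 2)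
     + bsol I1 I3 l s * (- \<i> * of_real (hsol I1 I3 l s $ 3 / I3) / 2)"
    unfolding hc hsol_c asol_def bsol_def w2 h3 w_def[symmetric] iw_def[symmetric] th_def[symmetric] zl_def[symmetric] L
    using R XY by simp
qed

lemma bl_mat2:
  "bounded_linear (\<lambda>z. mat2 z 0 0 0)" "bounded_linear (\<lambda>z. mat2 0 z 0 0)"
  "bounded_linear (\<lambda>z. mat2 0 0 z 0)" "bounded_linear (\<lambda>z. mat2 0 0 0 z)"
  by (auto simp: linear_conv_bounded_linear[symmetric] mat2_add mat2_scaleR intro!: linearI)

lemma mat2_split: "mat2 a b c d = mat2 a 0 0 0 + mat2 0 b 0 0 + mat2 0 0 c 0 + mat2 0 0 0 d"
  by (simp add: mat2_add)

lemma mat2_vderiv: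
  assumes "(a has_vector_derivative a') F" "(b has_vector_derivative b') F"
    "(c has_vector_derivative c') F" "(d has_vector_derivative d') F"
  shows "((\<lambda>s. mat2 (a s) (b s) (c s) (d s)) has_vector_derivative mat2 a' b' c' d') F"
proof -
  have "((\<lambda>s. mat2 (a s) 0 0 0 + mat2 0 (b s) 0 0 + mat2 0 0 (c s) 0 + mat2 0 0 0 (d s)) has_vector_derivative
     (mat2 a' 0 0 0 + mat2 0 b' 0 0 + mat2 0 0 c' 0 + mat2 0 0 0 d')) F"
  by (intro has_vector_derivative_add bounded_linear.has_vector_derivative[OF bl_mat2(1)]
     bounded_linear.has_vector_derivative[OF bl_mat2(2)] bounded_linear.has_vector_derivative[OF bl_mat2(3)]
     bounded_linear.has_vector_derivative[OF bl_mat2(4)] assms)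
  then show ?thesis by (simp add: mat2_add)
qed

lemma mat2_deriv:
  assumes "(a has_derivative a') F" "(b has_derivative b') F"
    "(c has_derivative c') F" "(d has_derivative d') F"
  shows "((\<lambda>s. mat2 (a s) (b s) (c s) (d s)) has_derivative (\<lambda>v. mat2 (a' v) (b' v) (c' v) (d' v))) F"
proof -
  have "((\<lambda>s. mat2 (a s) 0 0 0 + mat2 0 (b s) 0 0 + mat2 0 0 (c s) 0 + mat2 0 0 0 (d s)) has_derivative
     (\<lambda>v. mat2 (a' v) 0 0 0 + mat2 0 (b' v) 0 0 + mat2 0 0 (c' v) 0 + mat2 0 0 0 (d' v))) F"
  by (intro has_derivative_add bounded_linear.has_derivative[OF bl_mat2(1)]
     bounded_linear.has_derivative[OF bl_mat2(2)] bounded_linear.has_derivative[OF bl_mat2(3)]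
     bounded_linear.has_derivative[OF bl_mat2(4)] assms)
  then show ?thesis by (simp add: mat2_add)
qed

lemma vec_vderiv:
  fixes f :: "real \<Rightarrow> real^'n"
  assumes "\<And>i. ((\<lambda>s. f s $ i) has_real_derivative f' $ i) (at s)"
  shows "(f has_vector_derivative f') (at s)"
proof -
  have *: "((\<lambda>s. f s $ i) has_derivative (\<lambda>x. x * f' $ i)) (at s)" for i
    using assms[of i] unfolding has_field_derivative_def by (subst mult_commute_abs)
  show ?thesis
    unfolding has_vector_derivative_def
    apply (subst has_derivative_componentwise_within)
    using * by (auto simp: Basis_vec_def inner_axis)
qed

lemma hsol_deriv: "(hsol I1 I3 l has_vector_derivative coad (vel I1 I3 (hsol I1 I3 l s)) (hsol I1 I3 l s)) (at s)"
  proof (rule vec_vderiv)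
    fix i :: 3
    define c where "c = cc I1 I3 l"
    have e1: "hsol I1 I3 l s $ 1 = l$1 * cos (c * s) + l$2 * sin (c * s)" for s
      by (simp add: hsol_def c_def)
    have e2: "hsol I1 I3 l s $ 2 = - l$1 * sin (c * s) + l$2 * cos (c * s)" for s
      by (simp add: hsol_def c_def)
    have e3: "hsol I1 I3 l s $ 3 = l$3" for s
      by (simp add: hsol_def)
    have cv: "coad (vel I1 I3 (hsol I1 I3 l s)) (hsol I1 I3 l s) $ 1 = c * hsol I1 I3 l s $ 2"
       "coad (vel I1 I3 (hsol I1 I3 l s)) (hsol I1 I3 l s) $ 2 = - c * hsol I1 I3 l s $ 1"
       "coad (vel I1 I3 (hsol I1 I3 l s)) (hsol I1 I3 l s) $ 3 = 0"
      unfolding coad_vel e3 c_def cc_def by (simp_all add: algebra_simps)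
    have d1: "((\<lambda>s. hsol I1 I3 l s $ 1) has_real_derivative c * hsol I1 I3 l s $ 2) (at s)"
      unfolding e1 e2 by (rule derivative_eq_intros refl | simp)+ (simp add: algebra_simps)
    have d2: "((\<lambda>s. hsol I1 I3 l s $ 2) has_real_derivative - c * hsol I1 I3 l s $ 1) (at s)"
      unfolding e1 e2 by (rule derivative_eq_intros refl | simp)+ (simp add: algebra_simps)
    have d3: "((\<lambda>s. hsol I1 I3 l s $ 3) has_real_derivative 0) (at s)"
      unfolding e3 by simp
    have "i = 1 \<or> i = 2 \<or> i = 3" by (rule exhaust_3)
    then show "((\<lambda>s. hsol I1 I3 l s $ i) has_real_derivative coad (vel I1 I3 (hsol I1 I3 l s)) (hsol I1 I3 l s) $ i) (at s)"
      using d1 d2 d3 cv by auto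
  qed


definition gsol :: "real \<Rightarrow> real \<Rightarrow> real^3 \<Rightarrow> real \<Rightarrow> (complex^2^2) \<times> (real^3)" where
  "gsol I1 I3 l s = (mat2 (asol I1 I3 l s) (bsol I1 I3 l s) (- cnj (bsol I1 I3 l s)) (cnj (asol I1 I3 l s)), hsol I1 I3 l s)"

lemma mat2_eta: "(M::complex^2^2) = mat2 (M$1$1) (M$1$2) (M$2$1) (M$2$2)"
  by (simp add: mat2_def vec_eq_iff forall_2)

lemma hsol0: "hsol I1 I3 l 0 = l"
  by (simp add: hsol_def vec_eq_iff forall_3)

lemma ring_neg: fixes a b p q :: "'a::comm_ring_1" shows "a * p + b * (- q) = - b * q + a * p"
  by (simp add: algebra_simps)
lemma ring_neg2: fixes a b p q :: "'a::comm_ring_1" shows "- (a * (- q) + b * p) = - b * p + a * q"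
  by (simp add: algebra_simps)

lemma dA2:
  assumes I: "I1 > 0" "I3 > 0" and r: "norm l \<noteq> 0"
  shows "((\<lambda>s. cnj (asol I1 I3 l s)) has_vector_derivative
     (- cnj (bsol I1 I3 l s) * ((of_real (hsol I1 I3 l s $ 1 / I1) + \<i> * of_real (hsol I1 I3 l s $ 2 / I1)) / 2)
     + cnj (asol I1 I3 l s) * (- \<i> * of_real (hsol I1 I3 l s $ 3 / I3) / 2))) (at s)"
proof -
  have c1: "cnj (\<i> * of_real x / 2) = - \<i> * of_real x / 2" for x by simp
  have c2: "cnj ((- of_real a + \<i> * of_real b) / 2) = - ((of_real a + \<i> * of_real b) / 2)" for a b
    by (simp add: complex_eq_iff)
  show ?thesis
    by (rule has_vector_derivative_cnj[OF dA[OF I r], THEN has_vector_derivative_eq_rhs])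
       (simp only: complex_cnj_add complex_cnj_mult c1 c2 ring_neg)
qed

lemma dB2:
  assumes I: "I1 > 0" "I3 > 0" and r: "norm l \<noteq> 0"
  shows "((\<lambda>s. - cnj (bsol I1 I3 l s)) has_vector_derivative
     (- cnj (bsol I1 I3 l s) * (\<i> * of_real (hsol I1 I3 l s $ 3 / I3) / 2)
     + cnj (asol I1 I3 l s) * ((- of_real (hsol I1 I3 l s $ 1 / I1) + \<i> * of_real (hsol I1 I3 l s $ 2 / I1)) / 2))) (at s)"
proof -
  have c1: "cnj (- \<i> * of_real x / 2) = \<i> * of_real x / 2" for x by simp
  have c2: "cnj ((of_real a + \<i> * of_real b) / 2) = - ((- of_real a + \<i> * of_real b) / 2)" for a b
    by (simp add: complex_eq_iff)
  show ?thesis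
    by (rule has_vector_derivative_minus[OF has_vector_derivative_cnj[OF dB[OF I r]], THEN has_vector_derivative_eq_rhs])
       (simp only: complex_cnj_add complex_cnj_mult c1 c2 ring_neg2)
qed

lemma gsol_traj:
  assumes I: "I1 > 0" "I3 > 0" and r: "norm l \<noteq> 0"
  shows "ham_traj I1 I3 l (gsol I1 I3 l)"
  unfolding ham_traj_def
proof (intro conjI allI)
  show "gsol I1 I3 l 0 = (mat 1, l)"
    by (simp add: gsol_def asol_def bsol_def hsol0 mat2_one)
  fix s
  have dh: "(hsol I1 I3 l has_vector_derivative coad (vel I1 I3 (hsol I1 I3 l s)) (hsol I1 I3 l s)) (at s)"
    by (rule hsol_deriv)
  have dg: "((\<lambda>s. fst (gsol I1 I3 l s)) has_vector_derivative
       fst (gsol I1 I3 l s) ** vel_mat I1 I3 (snd (gsol I1 I3 l s))) (at s)"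
    unfolding gsol_def fst_conv snd_conv vel_mat_eq mat2_mult
    by (rule mat2_vderiv[OF dA[OF I r] dB[OF I r] dB2[OF I r] dA2[OF I r]])
  show "(gsol I1 I3 l has_vector_derivative
          (fst (gsol I1 I3 l s) ** vel_mat I1 I3 (snd (gsol I1 I3 l s)),
           coad (vel I1 I3 (snd (gsol I1 I3 l s))) (snd (gsol I1 I3 l s)))) (at s)"
  proof -
    have e: "gsol I1 I3 l = (\<lambda>x. (fst (gsol I1 I3 l x), hsol I1 I3 l x))" by (auto simp: gsol_def)
    show ?thesis using has_vector_derivative_Pair[OF dg dh] by (subst e) (simp add: gsol_def)
  qed
qed

lemma traj_unique:
  assumes I: "I1 > 0" "I3 > 0" and r: "norm l \<noteq> 0" and T: "ham_traj I1 I3 l \<gamma>"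
  shows "\<gamma> = gsol I1 I3 l"
proof
  fix s
  have H: "snd (\<gamma> s) = hsol I1 I3 l s" for s by (rule h_unique[OF T])
  define G where "G = (\<lambda>s. fst (\<gamma> s))"
  have G0: "G 0 = mat2 1 0 0 1" using T by (simp add: ham_traj_def G_def mat2_one)
  have dG: "((\<lambda>s. G s $ i $ j) has_vector_derivative (G s ** vel_mat I1 I3 (hsol I1 I3 l s)) $ i $ j) (at s)" for i j s
    unfolding G_def H[symmetric] by (rule comp_derivs(1)) (use T in \<open>auto simp: ham_traj_def\<close>)
  have dGe: "((\<lambda>s. G s $ i $ j) has_vector_derivative (mat2 (G s $1$1) (G s $1$2) (G s $2$1) (G s $2$2) ** vel_mat I1 I3 (hsol I1 I3 l s)) $ i $ j) (at s)" for i j s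
    using dG[of i j s] mat2_eta[of "G s"] by simp
  have dr: "((\<lambda>s. G s $ i $ 1) has_vector_derivative (G s $ i $ 1 * (\<i> * of_real (hsol I1 I3 l s $ 3 / I3) / 2)
     + G s $ i $ 2 * ((- of_real (hsol I1 I3 l s $ 1 / I1) + \<i> * of_real (hsol I1 I3 l s $ 2 / I1)) / 2))) (at s)"
     "((\<lambda>s. G s $ i $ 2) has_vector_derivative (G s $ i $ 1 * ((of_real (hsol I1 I3 l s $ 1 / I1) + \<i> * of_real (hsol I1 I3 l s $ 2 / I1)) / 2)
     + G s $ i $ 2 * (- \<i> * of_real (hsol I1 I3 l s $ 3 / I3) / 2))) (at s)" if "i = 1 \<or> i = 2" for i s
    using that dGe[of i 1 s] dGe[of i 2 s] by (auto simp only: vel_mat_eq mat2_mult mat2_nth)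
  have a0: "asol I1 I3 l 0 = 1" "bsol I1 I3 l 0 = 0" by (simp_all add: asol_def bsol_def)
  have row1: "G s $1$1 = asol I1 I3 l s \<and> G s $1$2 = bsol I1 I3 l s"
    by (rule row_unique[OF dr(1)[of 1] dr(2)[of 1] dA[OF I r] dB[OF I r]]) (use G0 a0 in \<open>simp_all add: mat2_nth\<close>)
  have row2: "G s $2$1 = - cnj (bsol I1 I3 l s) \<and> G s $2$2 = cnj (asol I1 I3 l s)"
    by (rule row_unique[OF dr(1)[of 2] dr(2)[of 2] dB2[OF I r] dA2[OF I r]]) (use G0 a0 in \<open>simp_all add: mat2_nth\<close>)
  have "G s = fst (gsol I1 I3 l s)"
    using row1 row2 mat2_eta[of "G s"] by (simp add: gsol_def)
  then show "\<gamma> s = gsol I1 I3 l s"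
    using H[of s] unfolding G_def by (simp add: gsol_def prod_eq_iff)
qed

lemma Exp_map_eq:
  assumes I: "I1 > 0" "I3 > 0" and r: "norm l \<noteq> 0"
  shows "Exp_map I1 I3 t l = mat2 (asol I1 I3 l t) (bsol I1 I3 l t) (- cnj (bsol I1 I3 l t)) (cnj (asol I1 I3 l t))"
proof -
  have "(THE \<gamma>. ham_traj I1 I3 l \<gamma>) = gsol I1 I3 l"
    apply (rule the_equality)
     apply (rule gsol_traj[OF I r])
    apply (erule traj_unique[OF I r])
    done
  then show ?thesis by (simp add: Exp_map_def gsol_def)
qed

lemma hd_nth: "((\<lambda>l::real^3. l $ j) has_derivative (\<lambda>v. v $ j)) (at h)"
  by (rule bounded_linear.has_derivative[OF bounded_linear_vec_nth has_derivative_ident])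

lemma hd_norm: assumes "h \<noteq> 0" shows "(norm has_derivative (\<lambda>v. inner h v / norm h)) (at h)"
proof -
  have "(norm has_derivative (\<lambda>v. v \<bullet> sgn h)) (at h)" using has_derivative_norm[OF assms] by simp
  moreover have "(\<lambda>v. v \<bullet> sgn h) = (\<lambda>v. inner h v / norm h)"
    by (auto simp: sgn_div_norm inner_commute divide_inverse)
  ultimately show ?thesis by simp
qed

lemma dP: fixes h :: "real^3" assumes "h \<noteq> 0" "I1 \<noteq> 0"
  shows "((\<lambda>l. cos (t * norm l / (2*I1))) has_derivative
     (\<lambda>v. - sin (t * norm h / (2*I1)) * (t * (inner h v / norm h) / (2*I1)))) (at h)"
  apply (rule derivative_eq_intros hd_norm[OF assms(1)] refl | simp add: assms)+
  by (rule ext) (simp add: algebra_simps)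

lemma dQ: fixes h :: "real^3" assumes "h \<noteq> 0" "I1 \<noteq> 0"
  shows "((\<lambda>l. l$3 / norm l * sin (t * norm l / (2*I1))) has_derivative
     (\<lambda>v. ((v$3 * norm h - h$3 * (inner h v / norm h)) / (norm h)^2) * sin (t * norm h / (2*I1))
        + h$3 / norm h * (cos (t * norm h / (2*I1)) * (t * (inner h v / norm h) / (2*I1))))) (at h)"
  apply (rule derivative_eq_intros hd_norm[OF assms(1)] hd_nth refl | simp add: assms)+
  by (rule ext) (simp add: field_simps power2_eq_square assms)

lemma dX: fixes h :: "real^3" and j :: 3 assumes "h \<noteq> 0" "I1 \<noteq> 0"
  shows "((\<lambda>l. sin (t * norm l / (2*I1)) / norm l * l$j) has_derivative
     (\<lambda>v. ((cos (t * norm h / (2*I1)) * (t * (inner h v / norm h) / (2*I1)) * norm h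
          - sin (t * norm h / (2*I1)) * (inner h v / norm h)) / (norm h)^2) * h$j
        + sin (t * norm h / (2*I1)) / norm h * v$j)) (at h)"
  apply (rule derivative_eq_intros hd_norm[OF assms(1)] hd_nth refl | simp add: assms)+
  by (rule ext) (simp add: field_simps power2_eq_square assms)

lemma dPhi: fixes h :: "real^3"
  shows "((\<lambda>l. t * cc I1 I3 l / 2) has_derivative (\<lambda>v. t * (v$3 * (1/I3 - 1/I1)) / 2)) (at h)"
  unfolding cc_def
  by (rule derivative_eq_intros hd_nth refl | simp)+

lemma alg_core:
  fixes ha hb hc v1 v2 v3 r k e S C dR dphi :: real
  assumes r: "r > 0" and k: "k > 0"
    and dR: "dR * r = ha * v1 + hb * v2 + hc * v3"
    and dphi: "dphi = k * e * v3"
    and S: "S \<noteq> 0"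
    and F: "(1 + e * (hc/r)^2) * S + e * (1 - (hc/r)^2) * (k*r) * C \<noteq> 0"
    and E1: "- S * (k*dR) - (hc/r * S) * dphi = 0"
    and E2: "((v3 * r - hc * dR)/r^2) * S + hc/r * (C * (k * dR)) + C * dphi = 0"
    and E3: "((C * (k*dR) * r - S * dR)/r^2) * ha + S/r * v1 + (S/r*hb) * dphi = 0"
    and E4: "((C * (k*dR) * r - S * dR)/r^2) * hb + S/r * v2 - (S/r*ha) * dphi = 0"
  shows "v1 = 0 \<and> v2 = 0 \<and> v3 = 0"
proof -
  define n3 where "n3 = hc / r"
  define dn3 where "dn3 = (v3 - n3 * dR) / r"
  have v3e: "v3 = r * dn3 + n3 * dR" using r unfolding dn3_def by (simp add: field_simps)
  have a1: "k * dR = - n3 * dphi"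
  proof -
    have "S * (k * dR + n3 * dphi) = 0" using E1 unfolding n3_def by (simp add: algebra_simps)
    then have "k * dR + n3 * dphi = 0" using S by simp
    then show ?thesis by linarith
  qed
  have a2: "S * dn3 + n3 * C * (k * dR) + C * dphi = 0"
  proof -
    have "(v3 * r - hc * dR)/r^2 = dn3" unfolding dn3_def n3_def using r by (simp add: field_simps power2_eq_square)
    then show ?thesis using E2 unfolding n3_def by (simp add: algebra_simps)
  qed
  have a3: "S * dn3 = - C * (1 - n3^2) * dphi"
  proof -
    have "S * dn3 + n3 * C * (- n3 * dphi) + C * dphi = 0" using a2 unfolding a1 .
    then show ?thesis by (simp add: algebra_simps power2_eq_square)
  qed
  have a4: "(1 + e * n3^2) * dphi = e * (k * r) * dn3"
  proof -
    have "dphi = e * (k * r * dn3 + n3 * (k * dR))" unfolding dphi v3e by (simp add: algebra_simps)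
    also have "\<dots> = e * (k * r * dn3) - e * n3^2 * dphi" unfolding a1 by (simp add: algebra_simps power2_eq_square)
    finally show ?thesis by (simp add: algebra_simps)
  qed
  have a5: "((1 + e * n3^2) * S + e * (1 - n3^2) * (k*r) * C) * dphi = 0"
  proof -
    have "(1 + e * n3^2) * S * dphi = e * (k * r) * (S * dn3)" using a4 by (metis mult.commute mult.left_commute)
    also have "\<dots> = - e * (k * r) * C * (1 - n3^2) * dphi" unfolding a3 by (simp add: algebra_simps)
    finally show ?thesis by (simp add: algebra_simps)
  qed
  have dphi0: "dphi = 0" using a5 F unfolding n3_def by simp
  have dR0: "dR = 0" using a1 dphi0 k by simp
  have dn30: "dn3 = 0" using a3 dphi0 S by simp
  have v30: "v3 = 0" using v3e dn30 dR0 by simp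
  have v10: "v1 = 0" using E3 dR0 dphi0 S r by simp
  have v20: "v2 = 0" using E4 dR0 dphi0 S r by simp
  show ?thesis using v10 v20 v30 by simp
qed

lemma cplx_deriv:
  fixes P Q Ph :: "real^3 \<Rightarrow> real"
  assumes "(P has_derivative P') (at h)" "(Q has_derivative Q') (at h)" "(Ph has_derivative Ph') (at h)"
  shows "((\<lambda>l. (of_real (P l) + \<i> * of_real (Q l)) * cis (Ph l)) has_derivative
    (\<lambda>v. (of_real (P' v) + \<i> * of_real (Q' v)) * cis (Ph h)
       + (of_real (P h) + \<i> * of_real (Q h)) * (\<i> * of_real (Ph' v) * cis (Ph h)))) (at h)"
  apply (rule derivative_eq_intros assms refl | simp)+
  by (rule ext) (simp add: scaleR_conv_of_real algebra_simps)

lemma mat2_zero: "(0::complex^2^2) = mat2 0 0 0 0"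
  by (simp add: mat2_def vec_eq_iff forall_2)

lemma Exp_inj:
  fixes h :: "real^3"
  assumes I: "I1 > 0" "I3 > 0" and h: "h \<noteq> 0" and t: "t > 0"
    and S: "sin (t * norm h / (2*I1)) \<noteq> 0"
    and F: "(1 + (I1/I3 - 1) * (h$3/norm h)^2) * sin (t * norm h / (2*I1))
       + (I1/I3 - 1) * (1 - (h$3/norm h)^2) * (t/(2*I1) * norm h) * cos (t * norm h / (2*I1)) \<noteq> 0"
  shows "\<exists>D. (Exp_map I1 I3 t has_derivative D) (at h) \<and> inj D"
proof -
  have I1: "I1 \<noteq> 0" using I by simp
  define r where "r = norm h"
  have r: "r > 0" using h by (simp add: r_def)
  define Sn where "Sn = sin (t * norm h / (2*I1))"
  define Cs where "Cs = cos (t * norm h / (2*I1))"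
  define dR where "dR = (\<lambda>v::real^3. inner h v / norm h)"
  define P where "P = (\<lambda>l::real^3. cos (t * norm l / (2*I1)))"
  define P' where "P' = (\<lambda>v. - sin (t * norm h / (2*I1)) * (t * (inner h v / norm h) / (2*I1)))"
  define Q where "Q = (\<lambda>l::real^3. l$3 / norm l * sin (t * norm l / (2*I1)))"
  define Q' where "Q' = (\<lambda>v. ((v$3 * norm h - h$3 * (inner h v / norm h)) / (norm h)^2) * sin (t * norm h / (2*I1))
        + h$3 / norm h * (cos (t * norm h / (2*I1)) * (t * (inner h v / norm h) / (2*I1))))"
  define X where "X = (\<lambda>j l::real^3. sin (t * norm l / (2*I1)) / norm l * l$j)"
  define X' where "X' = (\<lambda>j v::real^3. ((cos (t * norm h / (2*I1)) * (t * (inner h v / norm h) / (2*I1)) * norm h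
          - sin (t * norm h / (2*I1)) * (inner h v / norm h)) / (norm h)^2) * h$j
        + sin (t * norm h / (2*I1)) / norm h * v$j)"
  define Ph where "Ph = (\<lambda>l. t * cc I1 I3 l / 2)"
  define Ph' where "Ph' = (\<lambda>v::real^3. t * (v$3 * (1/I3 - 1/I1)) / 2)"
  have dP': "(P has_derivative P') (at h)" unfolding P_def P'_def by (rule dP[OF h I1])
  have dQ': "(Q has_derivative Q') (at h)" unfolding Q_def Q'_def by (rule dQ[OF h I1])
  have dX': "(X j has_derivative X' j) (at h)" for j unfolding X_def X'_def by (rule dX[OF h I1])
  have dPh: "(Ph has_derivative Ph') (at h)" unfolding Ph_def Ph'_def by (rule dPhi)
  have dPhm: "((\<lambda>l. - Ph l) has_derivative (\<lambda>v. - Ph' v)) (at h)" by (rule has_derivative_minus[OF dPh])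
  define DA where "DA = (\<lambda>v. (of_real (P' v) + \<i> * of_real (Q' v)) * cis (Ph h)
       + (of_real (P h) + \<i> * of_real (Q h)) * (\<i> * of_real (Ph' v) * cis (Ph h)))"
  define DB where "DB = (\<lambda>v. (of_real (X' 1 v) + \<i> * of_real (X' 2 v)) * cis (- Ph h)
       + (of_real (X 1 h) + \<i> * of_real (X 2 h)) * (\<i> * of_real (- Ph' v) * cis (- Ph h)))"
  have dA: "((\<lambda>l. (of_real (P l) + \<i> * of_real (Q l)) * cis (Ph l)) has_derivative DA) (at h)"
    unfolding DA_def by (rule cplx_deriv[OF dP' dQ' dPh])
  have dB: "((\<lambda>l. (of_real (X 1 l) + \<i> * of_real (X 2 l)) * cis (- Ph l)) has_derivative DB) (at h)"
    unfolding DB_def by (rule cplx_deriv[OF dX' dX' dPhm])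
  define D where "D = (\<lambda>v. mat2 (DA v) (DB v) (- cnj (DB v)) (cnj (DA v)))"
  have dM: "((\<lambda>l. mat2 ((of_real (P l) + \<i> * of_real (Q l)) * cis (Ph l))
                 ((of_real (X 1 l) + \<i> * of_real (X 2 l)) * cis (- Ph l))
                 (- cnj ((of_real (X 1 l) + \<i> * of_real (X 2 l)) * cis (- Ph l)))
                 (cnj ((of_real (P l) + \<i> * of_real (Q l)) * cis (Ph l)))) has_derivative D) (at h)"
    unfolding D_def
    by (rule mat2_deriv[OF dA dB has_derivative_minus[OF has_derivative_cnj[OF dB]] has_derivative_cnj[OF dA]])
  have dE: "(Exp_map I1 I3 t has_derivative D) (at h)"
  proof (rule has_derivative_transform_within_open[OF dM, of "- {0}"])
    show "open (- {0::real^3})" by auto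
    show "h \<in> - {0}" using h by simp
    fix l :: "real^3" assume "l \<in> - {0}"
    then have l: "norm l \<noteq> 0" by simp
    have ea: "asol I1 I3 l t = (of_real (P l) + \<i> * of_real (Q l)) * cis (Ph l)"
      by (simp add: asol_def P_def Q_def Ph_def)
    have eb: "bsol I1 I3 l t = (of_real (X 1 l) + \<i> * of_real (X 2 l)) * cis (- Ph l)"
      by (simp add: bsol_def X_def Ph_def algebra_simps add_divide_distrib)
    show "mat2 ((of_real (P l) + \<i> * of_real (Q l)) * cis (Ph l))
                 ((of_real (X 1 l) + \<i> * of_real (X 2 l)) * cis (- Ph l))
                 (- cnj ((of_real (X 1 l) + \<i> * of_real (X 2 l)) * cis (- Ph l)))
                 (cnj ((of_real (P l) + \<i> * of_real (Q l)) * cis (Ph l))) = Exp_map I1 I3 t l"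
      unfolding Exp_map_eq[OF I l] ea eb ..
  qed
  have lin: "linear D" using has_derivative_bounded_linear[OF dE] bounded_linear.linear by blast
  have "inj D"
    unfolding linear_injective_0[OF lin]
  proof (intro allI impI)
    fix v :: "real^3"
    assume "D v = 0"
    then have z: "DA v = 0" "DB v = 0" unfolding D_def mat2_zero mat2_eq_iff by simp_all
    have za: "(of_real (P' v) + \<i> * of_real (Q' v)) + (of_real (P h) + \<i> * of_real (Q h)) * (\<i> * of_real (Ph' v)) = 0"
    proof -
      have "((of_real (P' v) + \<i> * of_real (Q' v)) + (of_real (P h) + \<i> * of_real (Q h)) * (\<i> * of_real (Ph' v))) * cis (Ph h) = 0"
        using z(1) unfolding DA_def by (simp add: algebra_simps)
      then show ?thesis by simp
    qed
    have zb: "(of_real (X' 1 v) + \<i> * of_real (X' 2 v)) + (of_real (X 1 h) + \<i> * of_real (X 2 h)) * (\<i> * of_real (- Ph' v)) = 0"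
    proof -
      have "((of_real (X' 1 v) + \<i> * of_real (X' 2 v)) + (of_real (X 1 h) + \<i> * of_real (X 2 h)) * (\<i> * of_real (- Ph' v))) * cis (- Ph h) = 0"
        using z(2) unfolding DB_def by (simp add: algebra_simps)
      then show ?thesis by simp
    qed
    have e1: "P' v - Q h * Ph' v = 0" "Q' v + P h * Ph' v = 0" using za by (simp_all add: complex_eq_iff)
    have e2: "X' 1 v + X 2 h * Ph' v = 0" "X' 2 v - X 1 h * Ph' v = 0" using zb by (simp_all add: complex_eq_iff)
    have inner3: "inner h v = h$1 * v$1 + h$2 * v$2 + h$3 * v$3" by (simp add: inner_vec_def sum_3)
    have "v$1 = 0 \<and> v$2 = 0 \<and> v$3 = 0"
    proof (rule alg_core[where r = r and k = "t/(2*I1)" and e = "I1/I3 - 1" and S = Sn and C = Cs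
          and dR = "dR v" and dphi = "Ph' v" and ha = "h$1" and hb = "h$2" and hc = "h$3"])
      show "r > 0" by (rule r)
      show "t / (2*I1) > 0" using t I by simp
      show "dR v * r = h$1 * v$1 + h$2 * v$2 + h$3 * v$3" unfolding dR_def r_def inner3[symmetric] using r r_def by simp
      show "Ph' v = t / (2*I1) * (I1/I3 - 1) * v$3" unfolding Ph'_def using I by (simp add: field_simps)
      show "Sn \<noteq> 0" using S by (simp add: Sn_def)
      show "(1 + (I1/I3 - 1) * (h$3/r)^2) * Sn + (I1/I3 - 1) * (1 - (h$3/r)^2) * (t/(2*I1) * r) * Cs \<noteq> 0"
        using F by (simp add: Sn_def Cs_def r_def)
      show "- Sn * (t/(2*I1) * dR v) - (h$3/r * Sn) * Ph' v = 0"
        using e1(1) by (simp add: P'_def Q_def Sn_def dR_def r_def algebra_simps)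
      show "((v$3 * r - h$3 * dR v)/r^2) * Sn + h$3/r * (Cs * (t/(2*I1) * dR v)) + Cs * Ph' v = 0"
        using e1(2) by (simp add: Q'_def P_def Sn_def Cs_def dR_def r_def algebra_simps)
      show "((Cs * (t/(2*I1) * dR v) * r - Sn * dR v)/r^2) * h$1 + Sn/r * v$1 + (Sn/r * h$2) * Ph' v = 0"
        using e2(1) by (simp add: X'_def X_def Sn_def Cs_def dR_def r_def algebra_simps)
      show "((Cs * (t/(2*I1) * dR v) * r - Sn * dR v)/r^2) * h$2 + Sn/r * v$2 - (Sn/r * h$1) * Ph' v = 0"
        using e2(2) by (simp add: X'_def X_def Sn_def Cs_def dR_def r_def algebra_simps)
    qed
    then show "v = 0" by (simp add: vec_eq_iff forall_3)
  qed
  then show ?thesis using dE by blast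
qed

lemma ell_root_pos:
  fixes e s b :: real
  assumes e: "e > 0" and s: "s > 0" and b: "0 < b" "b \<le> pi/2"
  shows "\<exists>\<tau>. 0 < \<tau> \<and> \<tau> < pi/2 \<and> cos \<tau> * sin (\<tau> * e * s - b) + s * sin \<tau> * cos (\<tau> * e * s - b) = 0"
proof -
  define psi where "psi = (\<lambda>x. x * e * s + arctan (s * tan x))"
  define M where "M = 4 / (pi * e * s^2) + 1"
  have M1: "M > 1" using e s by (simp add: M_def)
  define x0 where "x0 = arctan M"
  have x0: "pi/4 < x0" "x0 < pi/2"
    using arctan_monotone[OF M1] arctan_ubound[of M] by (simp_all add: x0_def arctan_one)
  have tx0: "tan x0 = M" by (simp add: x0_def tan_arctan)
  have sM: "s * M > 0" using s M1 by simp
  have at: "arctan (s * M) = pi/2 - arctan (1 / (s * M))"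
  proof -
    have "arctan (1/(s*M)) = sgn (s*M) * pi/2 - arctan (s*M)"
      by (rule Transcendental.arctan_inverse) (use s M1 in simp)
    moreover have "sgn (s*M) = 1" using sM by simp
    ultimately show ?thesis by simp
  qed
  have at2: "arctan (1 / (s * M)) \<le> 1 / (s * M)" by (rule arctan_le_self) (use sM in simp)
  have "1 / (s * M) \<le> pi/4 * e * s"
  proof -
    have "4 / (pi * e * s) \<le> s * M"
      using e s by (simp add: M_def field_simps power2_eq_square)
    then have "1 / (s * M) \<le> 1 / (4 / (pi * e * s))"
      using e s M1 by (intro divide_left_mono) (auto intro!: mult_pos_pos divide_pos_pos)
    also have "\<dots> = pi/4 * e * s" by simp
    finally show ?thesis .
  qed
  moreover have "pi/4 * e * s < x0 * e * s" using x0 e s by simp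
  ultimately have px0: "psi x0 > pi/2" unfolding psi_def using tx0 at at2 by simp
  have cont: "\<forall>x. 0 \<le> x \<and> x \<le> x0 \<longrightarrow> isCont psi x"
  proof (intro allI impI)
    fix x assume x: "0 \<le> x \<and> x \<le> x0"
    then have "cos x > 0" using x0 by (intro cos_gt_zero_pi) auto
    then have cx: "cos x \<noteq> 0" by simp
    then have "isCont tan x" by (intro isCont_tan)
    then show "isCont psi x" unfolding psi_def using cx
      by (intro continuous_intros isCont_o2[OF _ isCont_arctan]) auto
  qed
  obtain xr where xr: "0 \<le> xr" "xr \<le> x0" "psi xr = b"
    using IVT[of psi 0 b x0] cont px0 b x0 by (auto simp: psi_def)
  have xr0: "xr \<noteq> 0" using xr b by (auto simp: psi_def)
  have cxr: "cos xr > 0" using xr x0 by (intro cos_gt_zero_pi) auto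
  define th where "th = arctan (s * tan xr)"
  have al: "xr * e * s - b = - th" using xr(3) unfolding psi_def th_def by simp
  have "sin th = s * tan xr * cos th"
    unfolding th_def sin_arctan cos_arctan by simp
  then have "cos xr * sin (xr * e * s - b) + s * sin xr * cos (xr * e * s - b) = cos th * (s * sin xr - cos xr * (s * tan xr))"
    unfolding al by (simp add: algebra_simps)
  also have "cos xr * (s * tan xr) = s * sin xr" using cxr by (simp add: tan_def)
  finally have "cos xr * sin (xr * e * s - b) + s * sin xr * cos (xr * e * s - b) = 0" by simp
  then show ?thesis using xr xr0 x0 by (intro exI[of _ xr]) auto
qed

lemma first_pos_root_le:
  assumes "\<tau> > 0" "f \<tau> = 0"
  shows "first_pos_root f \<le> ereal \<tau>"
  unfolding first_pos_root_def by (rule Inf_lower) (use assms in auto)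

lemma tau_ell_le:
  fixes p :: int
  assumes e: "e > 0" and p: "p \<ge> 2"
  shows "tau_ell e p s \<le> ereal (pi/2)"
proof -
  have b: "0 < pi / p" "pi / p \<le> pi/2" using p by (auto simp: field_simps)
  consider "s > 0" | "s = 0" | "s < 0" by linarith
  then show ?thesis
  proof cases
    case 1
    obtain x where x: "0 < x" "x < pi/2" "cos x * sin (x * e * s - pi/p) + s * sin x * cos (x * e * s - pi/p) = 0"
      using ell_root_pos[OF e 1 b] by blast
    have "first_pos_root (\<lambda>\<tau>. ell_minus e p \<tau> s) \<le> ereal x"
      by (rule first_pos_root_le) (use x in \<open>auto simp: ell_minus_def mult.assoc\<close>)
    then show ?thesis unfolding tau_ell_def using x
      by (meson dual_order.trans ereal_less_eq(3) less_imp_le min.coboundedI1)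
  next
    case 2
    have "first_pos_root (\<lambda>\<tau>. ell_minus e p \<tau> s) \<le> ereal (pi/2)"
      by (rule first_pos_root_le) (use 2 in \<open>auto simp: ell_minus_def\<close>)
    then show ?thesis unfolding tau_ell_def
      by (meson dual_order.trans min.cobounded1)
  next
    case 3
    then have s': "-s > 0" by simp
    obtain x where x: "0 < x" "x < pi/2" "cos x * sin (x * e * (-s) - pi/p) + (-s) * sin x * cos (x * e * (-s) - pi/p) = 0"
      using ell_root_pos[OF e s' b] by blast
    have eq: "ell_plus e p x s = - (cos x * sin (x * e * (-s) - pi/p) + (-s) * sin x * cos (x * e * (-s) - pi/p))"
    proof -
      have "x * e * (-s) - pi/p = - (x * e * s + pi/p)" by simp
      then show ?thesis unfolding ell_plus_def by (simp only: sin_minus cos_minus)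
    qed
    have "first_pos_root (\<lambda>\<tau>. ell_plus e p \<tau> s) \<le> ereal x"
      by (rule first_pos_root_le) (use x eq in auto)
    then show ?thesis unfolding tau_ell_def using x
      by (meson dual_order.trans ereal_less_eq(3) less_imp_le min.coboundedI2)
  qed
qed

lemma sin_gt_xcos:
  assumes "0 < x" "x < pi"
  shows "x * cos x < sin x"
proof -
  have "(\<lambda>x. sin x - x * cos x) 0 < (\<lambda>x. sin x - x * cos x) x"
  proof (rule DERIV_pos_imp_increasing_open[OF assms(1)])
    fix y assume y: "0 < y" "y < x"
    have "DERIV (\<lambda>x. sin x - x * cos x) y :> y * sin y"
      by (rule derivative_eq_intros refl | simp)+
    moreover have "y * sin y > 0" using y assms by (intro mult_pos_pos sin_gt_zero) auto
    ultimately show "\<exists>d. DERIV (\<lambda>x. sin x - x * cos x) y :> d \<and> d > 0" by blast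
  next
    show "continuous_on {0..x} (\<lambda>x. sin x - x * cos x)" by (intro continuous_intros)
  qed
  then show ?thesis by simp
qed

theorem mainTheorem7:
  fixes p q :: int and I1 I3 :: real
  assumes "p \<ge> 2" and "coprime p q" and "I1 > 0" and "I3 > 0"
  shows "\<forall>h \<in> C_set I1 I3. \<forall>t. 0 < t \<and> ereal t < t_max I1 I3 p h \<longrightarrow> \<not> conjugate_time I1 I3 h t"
proof (intro ballI allI impI)
  fix h :: "real^3" and t :: real
  assume hC: "h \<in> C_set I1 I3" and tt: "0 < t \<and> ereal t < t_max I1 I3 p h"
  have I: "I1 > 0" "I3 > 0" using assms by auto
  have t: "t > 0" using tt by simp
  have h0: "h \<noteq> 0" using hC by (auto simp: C_set_def)
  define r where "r = norm h"
  have r: "r > 0" using h0 by (simp add: r_def)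
  define e where "e = I1/I3 - 1"
  define s where "s = h$3 / norm h"
  define \<tau> where "\<tau> = t * norm h / (2*I1)"
  have tau0: "\<tau> > 0" using t r I by (simp add: \<tau>_def r_def)
  define m where "m = min (ereal pi) (tau_ell e p s)"
  have tm: "ereal t < ereal (2*I1/norm h) * m"
    using tt by (simp add: t_max_def Let_def m_def e_def s_def)
  have mpi: "m \<le> ereal pi" by (simp add: m_def)
  have mtl: "e > 0 \<Longrightarrow> m \<le> ereal (pi/2)"
    using tau_ell_le[of e p s] assms(1) unfolding m_def by (meson dual_order.trans min.cobounded2)
  have c0: "2*I1/norm h > 0" using I r r_def by simp
  obtain \<mu> where mu: "m = ereal \<mu>"
  proof (cases m)
    case (real x) then show ?thesis using that by blast
  next
    case PInf then show ?thesis using mpi by simp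
  next
    case MInf then show ?thesis using tm c0 I h0 by simp
  qed
  have tmu: "t < 2*I1/norm h * \<mu>" using tm mu by simp
  have taumu: "\<tau> < \<mu>"
  proof -
    have "t * norm h < 2 * I1 * \<mu>" using tmu r r_def by (simp add: field_simps)
    then show ?thesis using I by (simp add: \<tau>_def field_simps)
  qed
  have taupi: "\<tau> < pi" using taumu mpi mu by simp
  have taupi2: "e > 0 \<Longrightarrow> \<tau> < pi/2" using taumu mtl mu by simp
  have sinpos: "sin \<tau> > 0" using tau0 taupi by (intro sin_gt_zero)
  have s1: "s^2 \<le> 1"
  proof -
    have "\<bar>h$3\<bar> \<le> norm h" by (rule component_le_norm_cart)
    then have "\<bar>s\<bar> \<le> 1" using r r_def by (simp add: s_def abs_div divide_le_eq_1)
    then show ?thesis by (metis abs_le_square_iff abs_one power_one)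
  qed
  have e1: "1 + e > 0" using I by (simp add: e_def)
  have Fpos: "(1 + e * s^2) * sin \<tau> + e * (1 - s^2) * \<tau> * cos \<tau> > 0"
  proof (cases "e > 0")
    case True
    have "cos \<tau> > 0" using taupi2[OF True] tau0 by (intro cos_gt_zero_pi) auto
    moreover have "(1 + e * s^2) > 0" using True by (simp add: add_pos_nonneg)
    moreover have "e * (1 - s^2) \<ge> 0" using True s1 by simp
    ultimately show ?thesis using sinpos tau0
      by (simp add: add_pos_nonneg)
  next
    case False
    have k: "e * (1 - s^2) \<le> 0" using False s1 by (simp add: mult_nonpos_nonneg)
    have "e * (1 - s^2) * sin \<tau> \<le> e * (1 - s^2) * (\<tau> * cos \<tau>)"
      by (rule mult_left_mono_neg[OF less_imp_le[OF sin_gt_xcos[OF tau0 taupi]] k])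
    moreover have "(1 + e * s^2) * sin \<tau> + e * (1 - s^2) * sin \<tau> = (1 + e) * sin \<tau>"
      by (simp add: algebra_simps)
    moreover have "(1 + e) * sin \<tau> > 0" using e1 sinpos by simp
    ultimately show ?thesis by (simp add: mult.assoc)
  qed
  have ex: "\<exists>D. (Exp_map I1 I3 t has_derivative D) (at h) \<and> inj D"
  proof (rule Exp_inj[OF I h0 t])
    show "sin (t * norm h / (2*I1)) \<noteq> 0" using sinpos by (simp add: \<tau>_def)
    have "t / (2*I1) * norm h = \<tau>" by (simp add: \<tau>_def)
    then show "(1 + (I1/I3 - 1) * (h$3/norm h)^2) * sin (t * norm h / (2*I1))
       + (I1/I3 - 1) * (1 - (h$3/norm h)^2) * (t/(2*I1) * norm h) * cos (t * norm h / (2*I1)) \<noteq> 0"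
      using Fpos by (simp add: e_def s_def \<tau>_def)
  qed
  then show "\<not> conjugate_time I1 I3 h t" by (simp add: conjugate_time_def)
qed

end
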